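(* Let $\varepsilon \in (0,1/2]$ be the solution of $1 - H(\varepsilon) = \varepsilon/8$ (so $\varepsilon \approx 0.3735$), and let $\delta = \varepsilon/8 \approx 0.047$ and $c = \frac{1}{4}\log_2 \frac{9}{5} \approx 0.212$. Then the number $V(3,d)$ of vertices of $\Omega_3^d$ satisfies $$\log_2 V(3,d) \geq c\, 2^{\delta d}\,(1+o(1)) \quad \text{as } d \to \infty.$$ In particular, $V(3,d)$ grows doubly exponentially in $d$.
   Context: $H(x) = -x\log_2 x - (1-x)\log_2(1-x)$ is the binary entropy function. For integers $n,d \geq 1$ let $I_n^d = \{\alpha = (\alpha_1,\ldots,\alpha_d) : \alpha_i \in \{1,\ldots,n\}\}$. A $d$-dimensional matrix of order $n$ is an array $A = (a_\alpha)_{\alpha \in I_n^d}$ of real numbers. A line of $A$ is the set of entries obtained by fixing all but one coordinate of the index and letting the remaining coordinate range over $\{1,\ldots,n\}$. A matrix is polystochastic if all its entries are nonnegative and the sum of entries in each line equals $1$. $\Omega_n^d$ denotes the convex polytope (in $\mathbb{R}^{n^d}$) of all $d$-dimensional polystochastic matrices of order $n$, and $V(n,d)$ is its number of vertices (extreme points). *)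

theory Defs
  imports Complex_Main "HOL-Library.FuncSet"
begin

definition bin_entropy :: "real \<Rightarrow> real" where
  "bin_entropy x = - x * log 2 x - (1 - x) * log 2 (1 - x)"

definition index_set :: "nat \<Rightarrow> nat \<Rightarrow> (nat \<Rightarrow> nat) set" where
  "index_set n d = ({0..<d} \<rightarrow>\<^sub>E {1..n})"

text \<open>A d-dimensional matrix of order n is a real function on the index set;
  we represent it as a function on all indices which vanishes outside I_n^d.\<close>
definition polystochastic :: "nat \<Rightarrow> nat \<Rightarrow> ((nat \<Rightarrow> nat) \<Rightarrow> real) \<Rightarrow> bool" where
  "polystochastic n d A \<longleftrightarrow>
     (\<forall>\<alpha>. \<alpha> \<notin> index_set n d \<longrightarrow> A \<alpha> = 0) \<and>
     (\<forall>\<alpha>\<in>index_set n d. A \<alpha> \<ge> 0) \<and>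
     (\<forall>\<alpha>\<in>index_set n d. \<forall>i<d. (\<Sum>k\<in>{1..n}. A (\<alpha>(i := k))) = 1)"

definition Omega :: "nat \<Rightarrow> nat \<Rightarrow> ((nat \<Rightarrow> nat) \<Rightarrow> real) set" where
  "Omega n d = {A. polystochastic n d A}"

definition is_vertex :: "((nat \<Rightarrow> nat) \<Rightarrow> real) set \<Rightarrow> ((nat \<Rightarrow> nat) \<Rightarrow> real) \<Rightarrow> bool" where
  "is_vertex S A \<longleftrightarrow> A \<in> S \<and>
     \<not> (\<exists>B\<in>S. \<exists>C\<in>S. B \<noteq> C \<and> (\<exists>t::real. 0 < t \<and> t < 1 \<and>
           A = (\<lambda>\<alpha>. t * B \<alpha> + (1 - t) * C \<alpha>)))"

definition num_vertices :: "nat \<Rightarrow> nat \<Rightarrow> nat" where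
  "num_vertices n d = card {A. is_vertex (Omega n d) A}"

end

theory Submission
  imports Defs
begin


lemma idx_finite: "finite (index_set n d)"
  unfolding index_set_def by (simp add: finite_PiE)

lemma upd_in_idx: "\<alpha> \<in> index_set n d \<Longrightarrow> i < d \<Longrightarrow> k \<in> {1..n} \<Longrightarrow> \<alpha>(i:=k) \<in> index_set n d"
  unfolding index_set_def by (auto simp: PiE_iff extensional_def)

lemma poly_out: "polystochastic n d D \<Longrightarrow> \<alpha> \<notin> index_set n d \<Longrightarrow> D \<alpha> = 0"
  unfolding polystochastic_def by auto

lemma poly_nonneg: "polystochastic n d D \<Longrightarrow> 0 \<le> D \<alpha>"
  unfolding polystochastic_def by (cases "\<alpha> \<in> index_set n d") auto

lemma poly_line: "polystochastic n d D \<Longrightarrow> \<alpha> \<in> index_set n d \<Longrightarrow> i < d \<Longrightarrow> (\<Sum>k\<in>{1..n}. D (\<alpha>(i := k))) = 1"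
  unfolding polystochastic_def by auto

lemma nonvertex_of_sub:
  assumes D: "polystochastic n d D" and E: "polystochastic n d E"
    and sub: "\<forall>\<alpha>. E \<alpha> \<noteq> 0 \<longrightarrow> D \<alpha> \<noteq> 0" and ne: "E \<noteq> D"
  shows "\<not> is_vertex (Omega n d) D"
proof
  assume v: "is_vertex (Omega n d) D"
  define F where "F = (\<lambda>\<alpha>. E \<alpha> - D \<alpha>)"
  have Fz: "\<alpha> \<in> index_set n d \<and> D \<alpha> > 0" if "F \<alpha> \<noteq> 0" for \<alpha>
  proof -
    have "\<alpha> \<in> index_set n d" using that poly_out[OF D] poly_out[OF E] unfolding F_def by force
    moreover have "D \<alpha> \<noteq> 0" using that sub unfolding F_def by force
    ultimately show ?thesis using poly_nonneg[OF D, of \<alpha>] by auto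
  qed
  obtain \<alpha>0 where a0: "F \<alpha>0 \<noteq> 0" using ne by (auto simp: F_def fun_eq_iff)
  define S where "S = {\<alpha> \<in> index_set n d. F \<alpha> \<noteq> 0}"
  have finS: "finite S" unfolding S_def using idx_finite by auto
  have a0S: "\<alpha>0 \<in> S" using a0 Fz unfolding S_def by auto
  define u where "u = Min ((\<lambda>\<alpha>. D \<alpha> / \<bar>F \<alpha>\<bar>) ` S)"
  have upos: "u > 0" unfolding u_def
  proof (subst Min_gr_iff)
    show "finite ((\<lambda>\<alpha>. D \<alpha> / \<bar>F \<alpha>\<bar>) ` S)" using finS by simp
    show "(\<lambda>\<alpha>. D \<alpha> / \<bar>F \<alpha>\<bar>) ` S \<noteq> {}" using a0S by auto
    show "\<forall>a\<in>(\<lambda>\<alpha>. D \<alpha> / \<bar>F \<alpha>\<bar>) ` S. 0 < a" using Fz unfolding S_def by auto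
  qed
  have ule: "u * \<bar>F \<alpha>\<bar> \<le> D \<alpha>" for \<alpha>
  proof (cases "F \<alpha> = 0")
    case True then show ?thesis using poly_nonneg[OF D] by simp
  next
    case False
    then have "\<alpha> \<in> S" using Fz unfolding S_def by auto
    then have "u \<le> D \<alpha> / \<bar>F \<alpha>\<bar>" unfolding u_def using finS by auto
    then show ?thesis using False by (simp add: pos_le_divide_eq)
  qed
  have linF: "(\<Sum>k\<in>{1..n}. F (\<alpha>(i := k))) = 0" if "\<alpha> \<in> index_set n d" "i < d" for \<alpha> i
    unfolding F_def using poly_line[OF D that] poly_line[OF E that] by (simp add: sum_subtractf)
  have outF: "F \<alpha> = 0" if "\<alpha> \<notin> index_set n d" for \<alpha>
    using Fz that by blast
  define B where "B = (\<lambda>\<alpha>. D \<alpha> + u * F \<alpha>)"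
  define C where "C = (\<lambda>\<alpha>. D \<alpha> - u * F \<alpha>)"
  have "B \<in> Omega n d"
    unfolding Omega_def polystochastic_def
  proof (intro CollectI conjI allI impI ballI)
    fix \<alpha> assume "\<alpha> \<notin> index_set n d" then show "B \<alpha> = 0" unfolding B_def using outF poly_out[OF D] by simp
  next
    fix \<alpha>
    have "u * (- \<bar>F \<alpha>\<bar>) \<le> u * F \<alpha>" by (rule mult_left_mono) (use upos in auto)
    then show "0 \<le> B \<alpha>" unfolding B_def using ule[of \<alpha>] by linarith
  next
    fix \<alpha> i assume "\<alpha> \<in> index_set n d" "i < d"
    moreover have "(\<Sum>k\<in>{1..n}. u * F (\<alpha>(i := k))) = u * (\<Sum>k\<in>{1..n}. F (\<alpha>(i := k)))"
      by (rule sum_distrib_left[symmetric])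
    ultimately show "(\<Sum>k\<in>{1..n}. B (\<alpha>(i := k))) = 1" unfolding B_def
      using poly_line[OF D] linF by (simp add: sum.distrib)
  qed
  moreover have "C \<in> Omega n d"
    unfolding Omega_def polystochastic_def
  proof (intro CollectI conjI allI impI ballI)
    fix \<alpha> assume "\<alpha> \<notin> index_set n d" then show "C \<alpha> = 0" unfolding C_def using outF poly_out[OF D] by simp
  next
    fix \<alpha>
    have "u * F \<alpha> \<le> u * \<bar>F \<alpha>\<bar>" by (rule mult_left_mono) (use upos in auto)
    then show "0 \<le> C \<alpha>" unfolding C_def using ule[of \<alpha>] by linarith
  next
    fix \<alpha> i assume "\<alpha> \<in> index_set n d" "i < d"
    moreover have "(\<Sum>k\<in>{1..n}. u * F (\<alpha>(i := k))) = u * (\<Sum>k\<in>{1..n}. F (\<alpha>(i := k)))"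
      by (rule sum_distrib_left[symmetric])
    ultimately show "(\<Sum>k\<in>{1..n}. C (\<alpha>(i := k))) = 1" unfolding C_def
      using poly_line[OF D] linF by (simp add: sum_subtractf)
  qed
  moreover have "B \<noteq> C"
  proof
    assume "B = C" then have "B \<alpha>0 = C \<alpha>0" by simp
    then show False using a0 upos unfolding B_def C_def by simp
  qed
  moreover have "D = (\<lambda>\<alpha>. (1/2) * B \<alpha> + (1 - 1/2) * C \<alpha>)"
    unfolding B_def C_def by (simp add: fun_eq_iff algebra_simps)
  ultimately have "\<exists>B\<in>Omega n d. \<exists>C\<in>Omega n d. B \<noteq> C \<and> (\<exists>t::real. 0 < t \<and> t < 1 \<and>
           D = (\<lambda>\<alpha>. t * B \<alpha> + (1 - t) * C \<alpha>))"
    by (intro bexI[of _ B] bexI[of _ C] conjI exI[of _ "1/2"]) auto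
  then show False using v unfolding is_vertex_def by blast
qed



lemma nonvertex_smaller:
  assumes D: "polystochastic n d D" and nv: "\<not> is_vertex (Omega n d) D"
  shows "\<exists>Z. polystochastic n d Z \<and> (\<forall>\<alpha>. Z \<alpha> \<noteq> 0 \<longrightarrow> D \<alpha> \<noteq> 0) \<and>
     card {\<alpha> \<in> index_set n d. Z \<alpha> \<noteq> 0} < card {\<alpha> \<in> index_set n d. D \<alpha> \<noteq> 0}"
proof -
  have "D \<in> Omega n d" using D unfolding Omega_def by simp
  then obtain B C t where B: "polystochastic n d B" and C: "polystochastic n d C" and BC: "B \<noteq> C"
    and t: "0 < t" "t < 1" and Dq: "D = (\<lambda>\<alpha>. t * B \<alpha> + (1 - t) * C \<alpha>)"
    using nv unfolding is_vertex_def Omega_def by blast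
  have subB: "B \<alpha> \<noteq> 0 \<longrightarrow> D \<alpha> \<noteq> 0" for \<alpha>
  proof
    assume "B \<alpha> \<noteq> 0"
    then have "B \<alpha> > 0" using poly_nonneg[OF B, of \<alpha>] by auto
    moreover have "C \<alpha> \<ge> 0" using poly_nonneg[OF C] by auto
    ultimately have "t * B \<alpha> + (1 - t) * C \<alpha> > 0" using t
      by (simp add: add_pos_nonneg)
    then show "D \<alpha> \<noteq> 0" using Dq by simp
  qed
  have subC: "C \<alpha> \<noteq> 0 \<longrightarrow> D \<alpha> \<noteq> 0" for \<alpha>
  proof
    assume "C \<alpha> \<noteq> 0"
    then have "C \<alpha> > 0" using poly_nonneg[OF C, of \<alpha>] by auto
    moreover have "B \<alpha> \<ge> 0" using poly_nonneg[OF B] by auto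
    ultimately have "t * B \<alpha> + (1 - t) * C \<alpha> > 0" using t
      by (simp add: add_nonneg_pos)
    then show "D \<alpha> \<noteq> 0" using Dq by simp
  qed
  obtain E where E: "polystochastic n d E" and sub: "\<forall>\<alpha>. E \<alpha> \<noteq> 0 \<longrightarrow> D \<alpha> \<noteq> 0" and ne: "E \<noteq> D"
  proof (cases "B = D")
    case True then show ?thesis using that[OF C] subC BC by auto
  next
    case False then show ?thesis using that[OF B] subB by auto
  qed
  define F where "F = (\<lambda>\<alpha>. E \<alpha> - D \<alpha>)"
  have Fz: "\<alpha> \<in> index_set n d \<and> D \<alpha> > 0" if "F \<alpha> \<noteq> 0" for \<alpha>
  proof -
    have "\<alpha> \<in> index_set n d" using that poly_out[OF D] poly_out[OF E] unfolding F_def by force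
    moreover have "D \<alpha> \<noteq> 0" using that sub unfolding F_def by force
    ultimately show ?thesis using poly_nonneg[OF D, of \<alpha>] by auto
  qed
  obtain \<alpha>0 where a0: "F \<alpha>0 \<noteq> 0" using ne by (auto simp: F_def fun_eq_iff)
  define G where "G = (if (\<exists>\<alpha>. F \<alpha> < 0) then F else (\<lambda>\<alpha>. - F \<alpha>))"
  obtain \<alpha>1 where a1: "G \<alpha>1 < 0"
  proof (cases "\<exists>\<alpha>. F \<alpha> < 0")
    case True then show ?thesis using that unfolding G_def by auto
  next
    case False then have "F \<alpha>0 > 0" using a0 by (metis linorder_neqE_linordered_idom)
    then show ?thesis using that[of \<alpha>0] False unfolding G_def by auto
  qed
  have Gz: "\<alpha> \<in> index_set n d \<and> D \<alpha> > 0" if "G \<alpha> \<noteq> 0" for \<alpha>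
    using Fz that unfolding G_def by (auto split: if_splits)
  have linG: "(\<Sum>k\<in>{1..n}. G (\<alpha>(i := k))) = 0" if "\<alpha> \<in> index_set n d" "i < d" for \<alpha> i
    unfolding G_def F_def using poly_line[OF D that] poly_line[OF E that]
    by (simp add: sum_subtractf sum_negf)
  define S where "S = {\<alpha> \<in> index_set n d. G \<alpha> < 0}"
  have finS: "finite S" unfolding S_def using idx_finite by auto
  have a1S: "\<alpha>1 \<in> S" using a1 Gz unfolding S_def by auto
  define f where "f = (\<lambda>\<alpha>. D \<alpha> / (- G \<alpha>))"
  define s where "s = Min (f ` S)"
  have sin: "s \<in> f ` S" unfolding s_def using finS a1S by (intro Min_in) auto
  then obtain \<alpha>2 where a2: "\<alpha>2 \<in> S" "s = f \<alpha>2" by auto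
  have spos: "s > 0" using a2 Gz[of \<alpha>2] unfolding S_def f_def by (auto intro!: divide_pos_pos divide_pos_neg)
  have sle: "s \<le> f \<alpha>" if "\<alpha> \<in> S" for \<alpha> unfolding s_def using finS that by auto
  define Z where "Z = (\<lambda>\<alpha>. D \<alpha> + s * G \<alpha>)"
  have Znn: "0 \<le> Z \<alpha>" for \<alpha>
  proof (cases "G \<alpha> < 0")
    case True
    then have "\<alpha> \<in> S" using Gz unfolding S_def by auto
    then have "s \<le> D \<alpha> / (- G \<alpha>)" using sle unfolding f_def by auto
    moreover have "- G \<alpha> > 0" using True by simp
    ultimately have "s * (- G \<alpha>) \<le> D \<alpha>" using pos_le_divide_eq by blast
    then show ?thesis unfolding Z_def by simp
  next
    case False then show ?thesis unfolding Z_def using spos poly_nonneg[OF D, of \<alpha>] by simp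
  qed
  have outG: "G \<alpha> = 0" if "\<alpha> \<notin> index_set n d" for \<alpha> using Gz that by blast
  have Zp: "polystochastic n d Z"
    unfolding polystochastic_def
  proof (intro conjI allI impI ballI)
    fix \<alpha> assume "\<alpha> \<notin> index_set n d" then show "Z \<alpha> = 0" unfolding Z_def using outG poly_out[OF D] by simp
  next
    fix \<alpha> show "0 \<le> Z \<alpha>" by (rule Znn)
  next
    fix \<alpha> i assume h: "\<alpha> \<in> index_set n d" "i < d"
    have "(\<Sum>k\<in>{1..n}. s * G (\<alpha>(i := k))) = s * (\<Sum>k\<in>{1..n}. G (\<alpha>(i := k)))"
      by (rule sum_distrib_left[symmetric])
    then show "(\<Sum>k\<in>{1..n}. Z (\<alpha>(i := k))) = 1" unfolding Z_def
      using poly_line[OF D h] linG[OF h] by (simp add: sum.distrib)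
  qed
  have subZ: "\<forall>\<alpha>. Z \<alpha> \<noteq> 0 \<longrightarrow> D \<alpha> \<noteq> 0"
  proof (intro allI impI)
    fix \<alpha> assume "Z \<alpha> \<noteq> 0"
    then have "D \<alpha> \<noteq> 0 \<or> G \<alpha> \<noteq> 0" unfolding Z_def by auto
    then show "D \<alpha> \<noteq> 0" using Gz by force
  qed
  have Z0: "Z \<alpha>2 = 0" using a2 unfolding Z_def f_def S_def by auto
  have "G \<alpha>2 \<noteq> 0" using a2 unfolding S_def by auto
  then have D2: "D \<alpha>2 \<noteq> 0" "\<alpha>2 \<in> index_set n d" using Gz[of \<alpha>2] by auto
  have "{\<alpha> \<in> index_set n d. Z \<alpha> \<noteq> 0} < {\<alpha> \<in> index_set n d. D \<alpha> \<noteq> 0}"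
    using subZ Z0 D2 by blast
  then have "card {\<alpha> \<in> index_set n d. Z \<alpha> \<noteq> 0} < card {\<alpha> \<in> index_set n d. D \<alpha> \<noteq> 0}"
    by (rule psubset_card_mono[rotated]) (use idx_finite in auto)
  then show ?thesis using Zp subZ by blast
qed

lemma exists_vertex:
  assumes X: "polystochastic n d X"
  shows "\<exists>v. is_vertex (Omega n d) v \<and> (\<forall>\<alpha>. v \<alpha> \<noteq> 0 \<longrightarrow> X \<alpha> \<noteq> 0)"
proof -
  define P where "P = (\<lambda>D. polystochastic n d D \<and> (\<forall>\<alpha>. D \<alpha> \<noteq> 0 \<longrightarrow> X \<alpha> \<noteq> 0))"
  define m where "m = (\<lambda>D::(nat\<Rightarrow>nat)\<Rightarrow>real. card {\<alpha> \<in> index_set n d. D \<alpha> \<noteq> 0})"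
  have "P X" unfolding P_def using X by auto
  then obtain D where PD: "P D" and mD: "\<forall>y. P y \<longrightarrow> m D \<le> m y"
    using ex_has_least_nat[of P X m] by blast
  have "is_vertex (Omega n d) D"
  proof (rule ccontr)
    assume "\<not> is_vertex (Omega n d) D"
    then obtain Z where "polystochastic n d Z" "\<forall>\<alpha>. Z \<alpha> \<noteq> 0 \<longrightarrow> D \<alpha> \<noteq> 0" "m Z < m D"
      using nonvertex_smaller[of n d D] PD unfolding P_def m_def by blast
    moreover then have "P Z" using PD unfolding P_def by blast
    ultimately show False using mD by force
  qed
  then show ?thesis using PD unfolding P_def by blast
qed

lemma vertex_poly: "is_vertex (Omega n d) v \<Longrightarrow> polystochastic n d v"
  unfolding is_vertex_def Omega_def by auto

lemma vertices_finite: "finite {A. is_vertex (Omega n d) A}"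
proof -
  define V where "V = {A. is_vertex (Omega n d) A}"
  define f where "f = (\<lambda>A::(nat\<Rightarrow>nat)\<Rightarrow>real. {\<alpha> \<in> index_set n d. A \<alpha> \<noteq> 0})"
  have "inj_on f V"
  proof (rule inj_onI)
    fix A A' assume AV: "A \<in> V" and A'V: "A' \<in> V" and eq: "f A = f A'"
    have pA: "polystochastic n d A" and pA': "polystochastic n d A'"
      using AV A'V vertex_poly unfolding V_def by auto
    have "A' \<alpha> \<noteq> 0 \<longrightarrow> A \<alpha> \<noteq> 0" for \<alpha>
    proof
      assume h: "A' \<alpha> \<noteq> 0"
      then have "\<alpha> \<in> index_set n d" using poly_out[OF pA'] by blast
      then have "\<alpha> \<in> f A'" unfolding f_def using h by auto
      then show "A \<alpha> \<noteq> 0" using eq unfolding f_def by auto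
    qed
    then show "A = A'" using nonvertex_of_sub[OF pA pA'] AV unfolding V_def by blast
  qed
  moreover have "f ` V \<subseteq> Pow (index_set n d)" unfolding f_def by auto
  ultimately have "finite V"
    using finite_imageD finite_subset idx_finite by (metis finite_Pow_iff)
  then show ?thesis unfolding V_def .
qed

definition good :: "nat \<Rightarrow> ((nat \<Rightarrow> nat) \<Rightarrow> real) set \<Rightarrow> bool" where
  "good d F \<longleftrightarrow> (\<forall>X\<in>F. polystochastic 3 d X) \<and>
     (\<forall>X\<in>F. \<forall>Y\<in>F. X \<noteq> Y \<longrightarrow>
        \<not> (\<exists>D. polystochastic 3 d D \<and> (\<forall>\<alpha>. D \<alpha> \<noteq> 0 \<longrightarrow> X \<alpha> \<noteq> 0 \<and> Y \<alpha> \<noteq> 0)))"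

lemma card_le_vertices:
  assumes g: "good d F" and fin: "finite F"
  shows "card F \<le> num_vertices 3 d"
proof -
  have "\<forall>X\<in>F. \<exists>v. is_vertex (Omega 3 d) v \<and> (\<forall>\<alpha>. v \<alpha> \<noteq> 0 \<longrightarrow> X \<alpha> \<noteq> 0)"
    using g exists_vertex unfolding good_def by blast
  then obtain v where v: "\<And>X. X \<in> F \<Longrightarrow> is_vertex (Omega 3 d) (v X) \<and> (\<forall>\<alpha>. v X \<alpha> \<noteq> 0 \<longrightarrow> X \<alpha> \<noteq> 0)"
    by metis
  have "inj_on v F"
  proof (rule inj_onI)
    fix X Y assume X: "X \<in> F" and Y: "Y \<in> F" and eq: "v X = v Y"
    show "X = Y"
    proof (rule ccontr)
      assume "X \<noteq> Y"
      moreover have "polystochastic 3 d (v X)" using v[OF X] vertex_poly by blast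
      moreover have "\<forall>\<alpha>. v X \<alpha> \<noteq> 0 \<longrightarrow> X \<alpha> \<noteq> 0 \<and> Y \<alpha> \<noteq> 0" using v[OF X] v[OF Y] eq by metis
      ultimately show False using g X Y unfolding good_def by blast
    qed
  qed
  moreover have "v ` F \<subseteq> {A. is_vertex (Omega 3 d) A}" using v by auto
  ultimately show ?thesis unfolding num_vertices_def
    using card_inj_on_le vertices_finite by blast
qed



definition mg :: "nat \<Rightarrow> nat \<Rightarrow> (nat \<Rightarrow> nat) \<Rightarrow> (nat \<Rightarrow> nat) \<Rightarrow> (nat \<Rightarrow> nat)" where
  "mg d m x w = (\<lambda>i. if i < d then x i else if i < d + m then w i else undefined)"

lemma mg_idx:
  assumes "x \<in> index_set 3 d" "\<forall>i. d \<le> i \<longrightarrow> i < d + m \<longrightarrow> w i \<in> {1..3}"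
  shows "mg d m x w \<in> index_set 3 (d + m)"
  using assms unfolding index_set_def mg_def by (auto simp: PiE_iff extensional_def)

lemma restrict_mg:
  assumes "x \<in> index_set 3 d"
  shows "restrict (mg d m x w) {0..<d} = x"
  using assms unfolding index_set_def mg_def by (auto simp: PiE_iff extensional_def fun_eq_iff)

lemma mg_upd: "i < d \<Longrightarrow> mg d m (x(i:=k)) w = (mg d m x w)(i:=k)"
  unfolding mg_def by (auto simp: fun_eq_iff)

lemma slice_poly:
  assumes D: "polystochastic 3 (d + m) D" and w: "\<forall>i. d \<le> i \<longrightarrow> i < d + m \<longrightarrow> w i \<in> {1..3}"
  shows "polystochastic 3 d (\<lambda>x. if x \<in> index_set 3 d then D (mg d m x w) else 0)"
  unfolding polystochastic_def
proof (intro conjI allI impI ballI)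
  fix x show "0 \<le> (if x \<in> index_set 3 d then D (mg d m x w) else 0)" using poly_nonneg[OF D] by auto
next
  fix x i assume x: "x \<in> index_set 3 d" and i: "i < d"
  have "(\<Sum>k\<in>{1..3}. (if x(i:=k) \<in> index_set 3 d then D (mg d m (x(i:=k)) w) else 0))
      = (\<Sum>k\<in>{1..3}. D ((mg d m x w)(i:=k)))"
    by (rule sum.cong) (use x i upd_in_idx mg_upd in auto)
  also have "\<dots> = 1" using poly_line[OF D mg_idx[OF x w]] i by simp
  finally show "(\<Sum>k\<in>{1..3}. (if x(i:=k) \<in> index_set 3 d then D (mg d m (x(i:=k)) w) else 0)) = 1" .
qed auto

lemma poly_le1:
  assumes D: "polystochastic 3 d D" and d: "1 \<le> d"
  shows "D \<alpha> \<le> 1"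
proof (cases "\<alpha> \<in> index_set 3 d")
  case False then show ?thesis using poly_out[OF D] by simp
next
  case True
  then have a0: "\<alpha> 0 \<in> {1..3}" using d unfolding index_set_def by auto
  have "D \<alpha> = D (\<alpha>(0 := \<alpha> 0))" by simp
  also have "\<dots> \<le> (\<Sum>k\<in>{1..3}. D (\<alpha>(0 := k)))"
    by (rule member_le_sum[OF a0]) (use poly_nonneg[OF D] in auto)
  also have "\<dots> = 1" using poly_line[OF D True] d by simp
  finally show ?thesis .
qed

lemma good_image:
  assumes g: "good d F"
    and P: "\<forall>p\<in>P. polystochastic 3 (d + m) (\<Phi> p)"
    and sep: "\<forall>p\<in>P. \<forall>q\<in>P. p \<noteq> q \<longrightarrow> (\<exists>w X Y. (\<forall>i. d \<le> i \<longrightarrow> i < d + m \<longrightarrow> w i \<in> {1..3}) \<and>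
        (\<forall>x\<in>index_set 3 d. \<Phi> p (mg d m x w) = X x \<and> \<Phi> q (mg d m x w) = Y x) \<and> X \<noteq> Y \<and> X \<in> F \<and> Y \<in> F)"
  shows "good (d + m) (\<Phi> ` P) \<and> inj_on \<Phi> P"
proof -
  have inc: "\<not> (\<exists>D. polystochastic 3 (d + m) D \<and> (\<forall>\<alpha>. D \<alpha> \<noteq> 0 \<longrightarrow> \<Phi> p \<alpha> \<noteq> 0 \<and> \<Phi> q \<alpha> \<noteq> 0))"
    if p: "p \<in> P" and q: "q \<in> P" and pq: "p \<noteq> q" for p q
  proof
    assume "\<exists>D. polystochastic 3 (d + m) D \<and> (\<forall>\<alpha>. D \<alpha> \<noteq> 0 \<longrightarrow> \<Phi> p \<alpha> \<noteq> 0 \<and> \<Phi> q \<alpha> \<noteq> 0)"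
    then obtain D where D: "polystochastic 3 (d + m) D" and sD: "\<forall>\<alpha>. D \<alpha> \<noteq> 0 \<longrightarrow> \<Phi> p \<alpha> \<noteq> 0 \<and> \<Phi> q \<alpha> \<noteq> 0"
      by blast
    obtain w X Y where w: "\<forall>i. d \<le> i \<longrightarrow> i < d + m \<longrightarrow> w i \<in> {1..3}"
      and ev: "\<forall>x\<in>index_set 3 d. \<Phi> p (mg d m x w) = X x \<and> \<Phi> q (mg d m x w) = Y x"
      and XY: "X \<noteq> Y" "X \<in> F" "Y \<in> F"
      using sep p q pq by blast
    define D' where "D' = (\<lambda>x. if x \<in> index_set 3 d then D (mg d m x w) else 0)"
    have "polystochastic 3 d D'" unfolding D'_def by (rule slice_poly[OF D w])
    moreover have "\<forall>x. D' x \<noteq> 0 \<longrightarrow> X x \<noteq> 0 \<and> Y x \<noteq> 0"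
      using sD ev unfolding D'_def by (auto split: if_splits)
    ultimately show False using g XY unfolding good_def by blast
  qed
  have "good (d + m) (\<Phi> ` P)"
    unfolding good_def
  proof (intro conjI ballI impI)
    fix X assume "X \<in> \<Phi> ` P" then show "polystochastic 3 (d + m) X" using P by auto
  next
    fix X Y assume "X \<in> \<Phi> ` P" "Y \<in> \<Phi> ` P" "X \<noteq> Y"
    then obtain p q where "p \<in> P" "q \<in> P" "X = \<Phi> p" "Y = \<Phi> q" "p \<noteq> q" by auto
    then show "\<not> (\<exists>D. polystochastic 3 (d + m) D \<and> (\<forall>\<alpha>. D \<alpha> \<noteq> 0 \<longrightarrow> X \<alpha> \<noteq> 0 \<and> Y \<alpha> \<noteq> 0))"
      using inc by blast
  qed
  moreover have "inj_on \<Phi> P"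
  proof (rule inj_onI, rule ccontr)
    fix p q assume p: "p \<in> P" and q: "q \<in> P" and eq: "\<Phi> p = \<Phi> q" and ne: "p \<noteq> q"
    have "polystochastic 3 (d + m) (\<Phi> p) \<and> (\<forall>\<alpha>. \<Phi> p \<alpha> \<noteq> 0 \<longrightarrow> \<Phi> p \<alpha> \<noteq> 0 \<and> \<Phi> q \<alpha> \<noteq> 0)"
      using P p eq by auto
    then show False using inc[OF p q ne] by blast
  qed
  ultimately show ?thesis by blast
qed



definition lamtab :: "nat \<Rightarrow> nat \<Rightarrow> nat \<Rightarrow> real" where
  "lamtab a b c = (if a = 1 then (if b = 1 then (if c = 1 then (1) else if c = 2 then (1) else if c = 3 then (1) else 0) else if b = 2 then (if c = 1 then (1) else if c = 2 then (0) else if c = 3 then (1/2) else 0) else if b = 3 then (if c = 1 then (1) else if c = 2 then (1/2) else if c = 3 then (0) else 0) else 0) else if a = 2 then (if b = 1 then (if c = 1 then (1) else if c = 2 then (0) else if c = 3 then (1/2) else 0) else if b = 2 then (if c = 1 then (0) else if c = 2 then (0) else if c = 3 then (0) else 0) else if b = 3 then (if c = 1 then (1/2) else if c = 2 then (0) else if c = 3 then (1) else 0) else 0) else if a = 3 then (if b = 1 then (if c = 1 then (1) else if c = 2 then (1/2) else if c = 3 then (0) else 0) else if b = 2 then (if c = 1 then (1/2) else if c = 2 then (0) else if c = 3 then (1) else 0) else if b = 3 then (if c = 1 then (0) else if c = 2 then (1) else if c = 3 then (1/2) else 0) else 0) else 0)"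

definition pit :: "nat \<Rightarrow> nat \<Rightarrow> nat \<Rightarrow> real" where
  "pit a b c = (if (a + b + c) mod 3 = 0 then 1 else 0)"

definition mix :: "real \<Rightarrow> real \<Rightarrow> real \<Rightarrow> real \<Rightarrow> real" where
  "mix l p u v = l * (p * u + (1 - p) * (1 - u) / 2) + (1 - l) * (p * v + (1 - p) * (1 - v) / 2)"

lemma three: "{1..3::nat} = {1,2,3}" by auto

lemma cases3: "(b::nat) \<in> {1..3} \<Longrightarrow> b = 1 \<or> b = 2 \<or> b = 3" by auto

lemma line0: "b \<in> {1..3} \<Longrightarrow> c \<in> {1..3} \<Longrightarrow> (\<Sum>k\<in>{1..3}. mix (lamtab k b c) (pit k b c) u v) = 1"
  unfolding three by (elim insertE emptyE) (simp_all add: lamtab_def pit_def mix_def field_simps)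

lemma line1: "a \<in> {1..3} \<Longrightarrow> c \<in> {1..3} \<Longrightarrow> (\<Sum>k\<in>{1..3}. mix (lamtab a k c) (pit a k c) u v) = 1"
  unfolding three by (elim insertE emptyE) (simp_all add: lamtab_def pit_def mix_def field_simps)

lemma line2: "a \<in> {1..3} \<Longrightarrow> b \<in> {1..3} \<Longrightarrow> (\<Sum>k\<in>{1..3}. mix (lamtab a b k) (pit a b k) u v) = 1"
  unfolding three by (elim insertE emptyE) (simp_all add: lamtab_def pit_def mix_def field_simps)

lemma lam_bounds: "0 \<le> lamtab a b c \<and> lamtab a b c \<le> 1"
  unfolding lamtab_def by auto

lemma mix_nonneg:
  assumes "0 \<le> l" "l \<le> 1" "p = 0 \<or> p = 1" "0 \<le> u" "u \<le> 1" "0 \<le> v" "v \<le> 1"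
  shows "0 \<le> mix l p u v"
  using assms unfolding mix_def by (auto intro!: add_nonneg_nonneg mult_nonneg_nonneg)

lemma mix_sum:
  assumes "(\<Sum>k\<in>{1..3::nat}. a k) = 1" "(\<Sum>k\<in>{1..3::nat}. b k) = 1"
  shows "(\<Sum>k\<in>{1..3::nat}. mix l p (a k) (b k)) = 1"
proof -
  have sa: "a 1 + a 2 + a 3 = 1" and sb: "b 1 + b 2 + b 3 = 1" using assms unfolding three by simp_all
  have "(\<Sum>k\<in>{1..3::nat}. mix l p (a k) (b k)) =
     l * (p * (a 1 + a 2 + a 3) + (1 - p) * (3 - (a 1 + a 2 + a 3)) / 2)
     + (1 - l) * (p * (b 1 + b 2 + b 3) + (1 - p) * (3 - (b 1 + b 2 + b 3)) / 2)"
    unfolding three by (simp add: mix_def field_simps)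
  also have "\<dots> = 1" unfolding sa sb by (simp add: field_simps)
  finally show ?thesis .
qed

lemma restrict_idx: "\<alpha> \<in> index_set 3 (d + m) \<Longrightarrow> restrict \<alpha> {0..<d} \<in> index_set 3 d"
  unfolding index_set_def by (auto simp: PiE_iff)

lemma restrict_upd_lt: "(i::nat) < d \<Longrightarrow> restrict (\<alpha>(i:=k)) {0..<d} = (restrict \<alpha> {0..<d})(i:=k)"
  unfolding restrict_def fun_upd_def by (rule ext) auto

lemma restrict_upd_ge: "d \<le> (i::nat) \<Longrightarrow> restrict (\<alpha>(i:=k)) {0..<d} = restrict \<alpha> {0..<d}"
  unfolding restrict_def fun_upd_def by (rule ext) auto

lemma idx_val: "\<alpha> \<in> index_set n d \<Longrightarrow> i < d \<Longrightarrow> \<alpha> i \<in> {1..n}"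
  unfolding index_set_def by auto

definition ext3 :: "nat \<Rightarrow> ((nat \<Rightarrow> nat) \<Rightarrow> real) \<Rightarrow> ((nat \<Rightarrow> nat) \<Rightarrow> real) \<Rightarrow> (nat \<Rightarrow> nat) \<Rightarrow> real" where
  "ext3 d A B \<alpha> = (if \<alpha> \<in> index_set 3 (d + 3) then
     mix (lamtab (\<alpha> d) (\<alpha> (d+1)) (\<alpha> (d+2))) (pit (\<alpha> d) (\<alpha> (d+1)) (\<alpha> (d+2)))
       (A (restrict \<alpha> {0..<d})) (B (restrict \<alpha> {0..<d})) else 0)"

lemma ext3_poly:
  assumes A: "polystochastic 3 d A" and B: "polystochastic 3 d B" and d: "1 \<le> d"
  shows "polystochastic 3 (d + 3) (ext3 d A B)"
  unfolding polystochastic_def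
proof (intro conjI allI impI ballI)
  fix \<alpha> assume "\<alpha> \<notin> index_set 3 (d + 3)" then show "ext3 d A B \<alpha> = 0" unfolding ext3_def by simp
next
  fix \<alpha> assume "\<alpha> \<in> index_set 3 (d + 3)"
  then show "0 \<le> ext3 d A B \<alpha>" unfolding ext3_def
    using lam_bounds poly_nonneg[OF A] poly_nonneg[OF B] poly_le1[OF A d] poly_le1[OF B d]
    by (auto intro!: mix_nonneg simp: pit_def)
next
  fix \<alpha> i assume a: "\<alpha> \<in> index_set 3 (d + 3)" and i: "i < d + 3"
  define x where "x = restrict \<alpha> {0..<d}"
  have x: "x \<in> index_set 3 d" unfolding x_def using restrict_idx[OF a] .
  have up: "\<alpha>(i:=k) \<in> index_set 3 (d + 3)" if "k \<in> {1..3}" for k using upd_in_idx[OF a i that] .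
  have v0: "\<alpha> d \<in> {1..3}" "\<alpha> (d+1) \<in> {1..3}" "\<alpha> (d+2) \<in> {1..3}" using idx_val[OF a] by auto
  show "(\<Sum>k\<in>{1..3}. ext3 d A B (\<alpha>(i := k))) = 1"
  proof (cases "i < d")
    case True
    have "(\<Sum>k\<in>{1..3}. ext3 d A B (\<alpha>(i := k))) =
      (\<Sum>k\<in>{1..3}. mix (lamtab (\<alpha> d) (\<alpha> (d+1)) (\<alpha> (d+2))) (pit (\<alpha> d) (\<alpha> (d+1)) (\<alpha> (d+2)))
          (A (x(i:=k))) (B (x(i:=k))))"
      by (rule sum.cong) (use True up in \<open>auto simp: ext3_def restrict_upd_lt x_def\<close>)
    also have "\<dots> = 1" by (rule mix_sum) (use poly_line[OF A x] poly_line[OF B x] True in auto)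
    finally show ?thesis .
  next
    case False
    then have "i = d \<or> i = d + 1 \<or> i = d + 2" using i by auto
    moreover have "(\<Sum>k\<in>{1..3}. ext3 d A B (\<alpha>(d := k))) = 1"
    proof -
      have "(\<Sum>k\<in>{1..3}. ext3 d A B (\<alpha>(d := k))) =
        (\<Sum>k\<in>{1..3}. mix (lamtab k (\<alpha> (d+1)) (\<alpha> (d+2))) (pit k (\<alpha> (d+1)) (\<alpha> (d+2))) (A x) (B x))"
        by (rule sum.cong) (use upd_in_idx[OF a, of d] in \<open>auto simp: ext3_def restrict_upd_ge x_def\<close>)
      also have "\<dots> = 1" using line0 v0 by blast
      finally show ?thesis .
    qed
    moreover have "(\<Sum>k\<in>{1..3}. ext3 d A B (\<alpha>(d + 1 := k))) = 1"
    proof -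
      have "(\<Sum>k\<in>{1..3}. ext3 d A B (\<alpha>(d + 1 := k))) =
        (\<Sum>k\<in>{1..3}. mix (lamtab (\<alpha> d) k (\<alpha> (d+2))) (pit (\<alpha> d) k (\<alpha> (d+2))) (A x) (B x))"
        by (rule sum.cong) (use upd_in_idx[OF a, of "d+1"] in \<open>auto simp: ext3_def restrict_upd_ge x_def\<close>)
      also have "\<dots> = 1" using line1 v0 by blast
      finally show ?thesis .
    qed
    moreover have "(\<Sum>k\<in>{1..3}. ext3 d A B (\<alpha>(d + 2 := k))) = 1"
    proof -
      have "(\<Sum>k\<in>{1..3}. ext3 d A B (\<alpha>(d + 2 := k))) =
        (\<Sum>k\<in>{1..3}. mix (lamtab (\<alpha> d) (\<alpha> (d+1)) k) (pit (\<alpha> d) (\<alpha> (d+1)) k) (A x) (B x))"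
        by (rule sum.cong) (use upd_in_idx[OF a, of "d+2"] in \<open>auto simp: ext3_def restrict_upd_ge x_def\<close>)
      also have "\<dots> = 1" using line2 v0 by blast
      finally show ?thesis .
    qed
    ultimately show ?thesis by auto
  qed
qed

lemma ext3_slice1:
  assumes x: "x \<in> index_set 3 d"
  shows "ext3 d A B (mg d 3 x (\<lambda>_. 1)) = A x"
proof -
  have "mg d 3 x (\<lambda>_. 1) \<in> index_set 3 (d + 3)" by (rule mg_idx[OF x]) auto
  then show ?thesis unfolding ext3_def using restrict_mg[OF x]
    by (simp add: mg_def lamtab_def pit_def mix_def)
qed

lemma ext3_slice2:
  assumes x: "x \<in> index_set 3 d"
  shows "ext3 d A B (mg d 3 x (\<lambda>_. 2)) = B x"
proof -
  have "mg d 3 x (\<lambda>_. 2) \<in> index_set 3 (d + 3)" by (rule mg_idx[OF x]) auto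
  then show ?thesis unfolding ext3_def using restrict_mg[OF x]
    by (simp add: mg_def lamtab_def pit_def mix_def)
qed



definition ext1 :: "nat \<Rightarrow> ((nat \<Rightarrow> nat) \<Rightarrow> real) \<Rightarrow> (nat \<Rightarrow> nat) \<Rightarrow> real" where
  "ext1 d A \<alpha> = (if \<alpha> \<in> index_set 3 (d + 1) then
     mix 1 (if \<alpha> d = 1 then 1 else 0) (A (restrict \<alpha> {0..<d})) (A (restrict \<alpha> {0..<d})) else 0)"

lemma ext1_poly:
  assumes A: "polystochastic 3 d A" and d: "1 \<le> d"
  shows "polystochastic 3 (d + 1) (ext1 d A)"
  unfolding polystochastic_def
proof (intro conjI allI impI ballI)
  fix \<alpha> assume "\<alpha> \<notin> index_set 3 (d + 1)" then show "ext1 d A \<alpha> = 0" unfolding ext1_def by simp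
next
  fix \<alpha> assume "\<alpha> \<in> index_set 3 (d + 1)"
  then show "0 \<le> ext1 d A \<alpha>" unfolding ext1_def
    using poly_nonneg[OF A] poly_le1[OF A d]
    by (auto intro!: mix_nonneg)
next
  fix \<alpha> i assume a: "\<alpha> \<in> index_set 3 (d + 1)" and i: "i < d + 1"
  define x where "x = restrict \<alpha> {0..<d}"
  have x: "x \<in> index_set 3 d" unfolding x_def using restrict_idx[OF a] .
  have up: "\<alpha>(i:=k) \<in> index_set 3 (d + 1)" if "k \<in> {1..3}" for k using upd_in_idx[OF a i that] .
  show "(\<Sum>k\<in>{1..3}. ext1 d A (\<alpha>(i := k))) = 1"
  proof (cases "i < d")
    case True
    have "(\<Sum>k\<in>{1..3}. ext1 d A (\<alpha>(i := k))) =
      (\<Sum>k\<in>{1..3}. mix 1 (if \<alpha> d = 1 then 1 else 0) (A (x(i:=k))) (A (x(i:=k))))"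
      by (rule sum.cong) (use True up in \<open>auto simp: ext1_def restrict_upd_lt x_def\<close>)
    also have "\<dots> = 1" by (rule mix_sum) (use poly_line[OF A x] True in auto)
    finally show ?thesis .
  next
    case False
    then have id: "i = d" using i by auto
    have "(\<Sum>k\<in>{1..3}. ext1 d A (\<alpha>(i := k))) =
        (\<Sum>k::nat\<in>{1..3}. mix 1 (if k = 1 then 1 else 0) (A x) (A x))"
      by (rule sum.cong) (use upd_in_idx[OF a, of d] id in \<open>auto simp: ext1_def restrict_upd_ge x_def\<close>)
    also have "\<dots> = 1" unfolding three by (simp add: mix_def field_simps)
    finally show ?thesis .
  qed
qed

lemma ext1_slice:
  assumes x: "x \<in> index_set 3 d"
  shows "ext1 d A (mg d 1 x (\<lambda>_. 1)) = A x"
proof -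
  have "mg d 1 x (\<lambda>_. 1) \<in> index_set 3 (d + 1)" by (rule mg_idx[OF x]) auto
  then show ?thesis unfolding ext1_def using restrict_mg[OF x]
    by (simp add: mg_def mix_def)
qed

lemma step1:
  assumes g: "good d F" and fin: "finite F" and d: "1 \<le> d"
  shows "good (d + 1) (ext1 d ` F) \<and> finite (ext1 d ` F) \<and> card (ext1 d ` F) = card F"
proof -
  have "good (d + 1) (ext1 d ` F) \<and> inj_on (ext1 d) F"
  proof (rule good_image[OF g])
    show "\<forall>p\<in>F. polystochastic 3 (d + 1) (ext1 d p)" using g ext1_poly d unfolding good_def by blast
    show "\<forall>p\<in>F. \<forall>q\<in>F. p \<noteq> q \<longrightarrow> (\<exists>w X Y. (\<forall>i. d \<le> i \<longrightarrow> i < d + 1 \<longrightarrow> w i \<in> {1..3}) \<and>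
        (\<forall>x\<in>index_set 3 d. ext1 d p (mg d 1 x w) = X x \<and> ext1 d q (mg d 1 x w) = Y x) \<and> X \<noteq> Y \<and> X \<in> F \<and> Y \<in> F)"
    proof (intro ballI impI)
      fix p q assume "p \<in> F" "q \<in> F" "p \<noteq> q"
      show "\<exists>w X Y. (\<forall>i. d \<le> i \<longrightarrow> i < d + 1 \<longrightarrow> w i \<in> {1..3}) \<and>
        (\<forall>x\<in>index_set 3 d. ext1 d p (mg d 1 x w) = X x \<and> ext1 d q (mg d 1 x w) = Y x) \<and> X \<noteq> Y \<and> X \<in> F \<and> Y \<in> F"
      proof -
        have "(\<forall>i. d \<le> i \<longrightarrow> i < d + 1 \<longrightarrow> (\<lambda>_. 1::nat) i \<in> {1..3}) \<and>
          (\<forall>x\<in>index_set 3 d. ext1 d p (mg d 1 x (\<lambda>_. 1)) = p x \<and> ext1 d q (mg d 1 x (\<lambda>_. 1)) = q x) \<and> p \<noteq> q \<and> p \<in> F \<and> q \<in> F"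
          using \<open>p \<in> F\<close> \<open>q \<in> F\<close> \<open>p \<noteq> q\<close> using ext1_slice[of _ d] by auto
        then show ?thesis by - (rule exI[where x="\<lambda>_. 1::nat"], rule exI[where x=p], rule exI[where x=q], assumption)
      qed
    qed
  qed
  then show ?thesis using fin by (simp add: card_image)
qed

lemma step3:
  assumes g: "good d F" and fin: "finite F" and d: "1 \<le> d"
  shows "good (d + 3) ((\<lambda>(A, B). ext3 d A B) ` (F \<times> F)) \<and> finite ((\<lambda>(A, B). ext3 d A B) ` (F \<times> F))
     \<and> card ((\<lambda>(A, B). ext3 d A B) ` (F \<times> F)) = card F * card F"
proof -
  have "good (d + 3) ((\<lambda>(A, B). ext3 d A B) ` (F \<times> F)) \<and> inj_on (\<lambda>(A, B). ext3 d A B) (F \<times> F)"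
  proof (rule good_image[OF g])
    show "\<forall>p\<in>F \<times> F. polystochastic 3 (d + 3) ((\<lambda>(A, B). ext3 d A B) p)"
      using g ext3_poly d unfolding good_def by auto
    show "\<forall>p\<in>F \<times> F. \<forall>q\<in>F \<times> F. p \<noteq> q \<longrightarrow> (\<exists>w X Y. (\<forall>i. d \<le> i \<longrightarrow> i < d + 3 \<longrightarrow> w i \<in> {1..3}) \<and>
        (\<forall>x\<in>index_set 3 d. (\<lambda>(A, B). ext3 d A B) p (mg d 3 x w) = X x \<and> (\<lambda>(A, B). ext3 d A B) q (mg d 3 x w) = Y x)
         \<and> X \<noteq> Y \<and> X \<in> F \<and> Y \<in> F)"
    proof (intro ballI impI)
      fix p q assume p: "p \<in> F \<times> F" and q: "q \<in> F \<times> F" and pq: "p \<noteq> q"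
      obtain A B A' B' where pe: "p = (A, B)" and qe: "q = (A', B')" by fastforce
      show "\<exists>w X Y. (\<forall>i. d \<le> i \<longrightarrow> i < d + 3 \<longrightarrow> w i \<in> {1..3}) \<and>
        (\<forall>x\<in>index_set 3 d. (\<lambda>(A, B). ext3 d A B) p (mg d 3 x w) = X x \<and> (\<lambda>(A, B). ext3 d A B) q (mg d 3 x w) = Y x)
         \<and> X \<noteq> Y \<and> X \<in> F \<and> Y \<in> F"
      proof (cases "A = A'")
        case False
        have "(\<forall>i. d \<le> i \<longrightarrow> i < d + 3 \<longrightarrow> (\<lambda>_. 1::nat) i \<in> {1..3}) \<and>
          (\<forall>x\<in>index_set 3 d. (\<lambda>(A, B). ext3 d A B) p (mg d 3 x (\<lambda>_. 1)) = A x \<and> (\<lambda>(A, B). ext3 d A B) q (mg d 3 x (\<lambda>_. 1)) = A' x)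
          \<and> A \<noteq> A' \<and> A \<in> F \<and> A' \<in> F"
          using p q False unfolding pe qe using ext3_slice1[of _ d] by auto
        then show ?thesis by - (rule exI[where x="\<lambda>_. 1::nat"], rule exI[where x=A], rule exI[where x=A'], assumption)
      next
        case True
        then have "B \<noteq> B'" using pq pe qe by auto
        have "(\<forall>i. d \<le> i \<longrightarrow> i < d + 3 \<longrightarrow> (\<lambda>_. 2::nat) i \<in> {1..3}) \<and>
          (\<forall>x\<in>index_set 3 d. (\<lambda>(A, B). ext3 d A B) p (mg d 3 x (\<lambda>_. 2)) = B x \<and> (\<lambda>(A, B). ext3 d A B) q (mg d 3 x (\<lambda>_. 2)) = B' x)
          \<and> B \<noteq> B' \<and> B \<in> F \<and> B' \<in> F"
          using p q \<open>B \<noteq> B'\<close> unfolding pe qe using ext3_slice2[of _ d] by auto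
        then show ?thesis by - (rule exI[where x="\<lambda>_. 2::nat"], rule exI[where x=B], rule exI[where x=B'], assumption)
      qed
    qed
  qed
  then show ?thesis using fin by (simp add: card_image card_cartesian_product)
qed

definition P1 :: "nat \<Rightarrow> (nat \<Rightarrow> nat) \<Rightarrow> real" where
  "P1 c \<alpha> = (if \<alpha> \<in> index_set 3 1 then (if \<alpha> 0 = c then 1 else 0) else 0)"

lemma P1_poly: "c \<in> {1..3} \<Longrightarrow> polystochastic 3 1 (P1 c)"
  unfolding polystochastic_def
proof (intro conjI allI impI ballI)
  fix \<alpha> and i :: nat assume c: "c \<in> {1..3}" and a: "\<alpha> \<in> index_set 3 1" and i: "i < 1"
  have "(\<Sum>k\<in>{1..3}. P1 c (\<alpha>(i := k))) = (\<Sum>k::nat\<in>{1..3}. (if k = c then 1 else 0::real))"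
    by (rule sum.cong) (use i upd_in_idx[OF a i] in \<open>auto simp: P1_def\<close>)
  also have "\<dots> = 1" using c by simp
  finally show "(\<Sum>k\<in>{1..3}. P1 c (\<alpha>(i := k))) = 1" .
qed (auto simp: P1_def)

lemma base: "good 1 {P1 1, P1 2} \<and> card {P1 1, P1 2} = 2"
proof -
  define a where "a = (\<lambda>i::nat. if i = 0 then (1::nat) else undefined)"
  have a: "a \<in> index_set 3 1" unfolding a_def index_set_def by (auto simp: PiE_iff extensional_def)
  have ne: "P1 1 \<noteq> P1 2"
  proof
    assume "P1 1 = P1 2" then have "P1 1 a = P1 2 a" by simp
    then show False using a unfolding P1_def a_def by simp
  qed
  have inc: "\<not> (\<exists>D. polystochastic 3 1 D \<and> (\<forall>\<alpha>. D \<alpha> \<noteq> 0 \<longrightarrow> P1 1 \<alpha> \<noteq> 0 \<and> P1 2 \<alpha> \<noteq> 0))"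
  proof
    assume "\<exists>D. polystochastic 3 1 D \<and> (\<forall>\<alpha>. D \<alpha> \<noteq> 0 \<longrightarrow> P1 1 \<alpha> \<noteq> 0 \<and> P1 2 \<alpha> \<noteq> 0)"
    then obtain D where D: "polystochastic 3 1 D" and s: "\<forall>\<alpha>. D \<alpha> \<noteq> 0 \<longrightarrow> P1 1 \<alpha> \<noteq> 0 \<and> P1 2 \<alpha> \<noteq> 0" by blast
    have z: "D \<alpha> = 0" for \<alpha>
    proof (rule ccontr)
      assume "D \<alpha> \<noteq> 0"
      then have "P1 1 \<alpha> \<noteq> 0 \<and> P1 2 \<alpha> \<noteq> 0" using s by blast
      then show False unfolding P1_def by (auto split: if_splits)
    qed
    show False using poly_line[OF D a, of 0] z by simp
  qed
  have "good 1 {P1 1, P1 2}" unfolding good_def using P1_poly[of 1] P1_poly[of 2] inc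
    by (auto simp: conj_commute)
  then show ?thesis using ne by simp
qed

lemma fam: "1 \<le> d \<Longrightarrow> \<exists>F. good d F \<and> finite F \<and> 2 ^ (2 ^ ((d - 1) div 3)) \<le> card F"
proof (induction d rule: less_induct)
  case (less d)
  show ?case
  proof (cases "d \<le> 3")
    case True
    have "(d - 1) div 3 = 0" using True by auto
    moreover have "\<exists>F. good d F \<and> finite F \<and> 2 \<le> card F"
    proof (cases "d = 1")
      case True then show ?thesis using base by (intro exI[of _ "{P1 1, P1 2}"]) auto
    next
      case False
      then have "1 \<le> d - 1" "d - 1 < d" using less.prems by auto
      then obtain F where F: "good (d - 1) F" "finite F" "2 ^ (2 ^ ((d - 1 - 1) div 3)) \<le> card F"
        using less.IH by blast
      have "(d - 1 - 1) div 3 = 0" using True by auto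
      then have "2 \<le> card F" using F by simp
      moreover have "d - 1 + 1 = d" using False less.prems by auto
      ultimately show ?thesis using step1[OF F(1,2) \<open>1 \<le> d - 1\<close>] by metis
    qed
    ultimately show ?thesis by simp
  next
    case False
    then have h: "1 \<le> d - 3" "d - 3 < d" by auto
    then obtain F where F: "good (d - 3) F" "finite F" "2 ^ (2 ^ ((d - 3 - 1) div 3)) \<le> card F"
      using less.IH by blast
    define j where "j = (d - 3 - 1) div 3"
    have jj: "(d - 1) div 3 = Suc j" unfolding j_def using False by auto
    have "(2::nat) ^ (2 ^ (Suc j)) = 2 ^ (2 ^ j) * 2 ^ (2 ^ j)"
      by (simp add: power_add[symmetric] mult_2)
    also have "\<dots> \<le> card F * card F" using F(3) unfolding j_def by (intro mult_mono) auto
    finally have c: "2 ^ (2 ^ ((d - 1) div 3)) \<le> card F * card F" unfolding jj .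
    have "d - 3 + 3 = d" using False by auto
    then show ?thesis using step3[OF F(1,2) h(1)] c by metis
  qed
qed



theorem theorem5:
  fixes \<epsilon> :: real
  assumes "0 < \<epsilon>" "\<epsilon> \<le> 1/2" "1 - bin_entropy \<epsilon> = \<epsilon> / 8"
  shows "\<exists>g :: nat \<Rightarrow> real. g \<longlonglongrightarrow> 0 \<and>
           (\<forall>\<^sub>F d in sequentially.
              log 2 (real (num_vertices 3 d))
                \<ge> (1/4 * log 2 (9/5)) * 2 powr ((\<epsilon> / 8) * real d) * (1 + g d))"
proof -
  have key: "(1/4 * log 2 (9/5)) * 2 powr ((\<epsilon> / 8) * real d) \<le> log 2 (real (num_vertices 3 d))"
    if d: "4 \<le> d" for d
  proof -
    obtain F where F: "good d F" "finite F" "2 ^ (2 ^ ((d - 1) div 3)) \<le> card F"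
      using fam[of d] d by auto
    define j where "j = (d - 1) div 3"
    have V: "2 ^ (2 ^ j) \<le> num_vertices 3 d" using card_le_vertices[OF F(1,2)] F(3) unfolding j_def by linarith
    have "log 2 (real (2 ^ (2 ^ j))) \<le> log 2 (real (num_vertices 3 d))"
    proof (subst log_le_cancel_iff)
      show "real (2 ^ 2 ^ j) \<le> real (num_vertices 3 d)" using V by linarith
      have "(0::nat) < 2 ^ 2 ^ j" by simp
      then show "0 < real (num_vertices 3 d)" using V by linarith
    qed auto
    moreover have "log 2 (real (2 ^ (2 ^ j))) = 2 ^ j" by (simp add: log_nat_power)
    ultimately have L: "2 ^ j \<le> log 2 (real (num_vertices 3 d))" by simp
    have "d - 1 = 3 * j + (d - 1) mod 3" unfolding j_def by simp
    moreover have "(d - 1) mod 3 < 3" by simp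
    ultimately have "d \<le> 3 * j + 3" using d by linarith
    then have jr: "real d \<le> 3 * real j + 3" by linarith
    have "\<epsilon> / 8 * real d \<le> (1/2) / 8 * real d" using assms(2) by (intro mult_right_mono) auto
    also have "\<dots> \<le> real j" using jr d by simp
    finally have e: "\<epsilon> / 8 * real d \<le> real j" .
    have "2 powr (\<epsilon> / 8 * real d) \<le> 2 powr (real j)" using e by (intro powr_mono) auto
    also have "\<dots> = 2 ^ j" by (simp add: powr_realpow)
    finally have P: "2 powr (\<epsilon> / 8 * real d) \<le> 2 ^ j" .
    have "log 2 (9/5) \<le> log 2 16" by (subst log_le_cancel_iff) auto
    also have "log 2 (16::real) = 4"
    proof -
      have "log 2 ((2::real) ^ 4) = 4" by (simp only: log_nat_power) simp
      moreover have "(2::real) ^ 4 = 16" by simp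
      ultimately show ?thesis by simp
    qed
    finally have c1: "1/4 * log 2 (9/5) \<le> (1::real)" by simp
    have "(1/4 * log 2 (9/5)) * 2 powr ((\<epsilon> / 8) * real d) \<le> 1 * 2 powr ((\<epsilon> / 8) * real d)"
      by (rule mult_right_mono[OF c1]) simp
    also have "\<dots> \<le> 2 ^ j" using P by simp
    finally show ?thesis using L by linarith
  qed
  show ?thesis
  proof (intro exI[of _ "\<lambda>_. 0"] conjI)
    show "(\<lambda>_. 0::real) \<longlonglongrightarrow> 0" by simp
    show "\<forall>\<^sub>F d in sequentially. (1/4 * log 2 (9/5)) * 2 powr ((\<epsilon> / 8) * real d) * (1 + (\<lambda>_. 0::real) d)
          \<le> log 2 (real (num_vertices 3 d))"
      unfolding eventually_sequentially using key by auto
  qed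
qed

end
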